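(* Let $\gamma>0$, $p\geq1$, and $B\geq A$ be real numbers. Let $(a,b)\subseteq\mathbb{R}$ be an interval, and let $v:\mathcal{D}\cap(a,b)\to[A,B]$ be a function. Assume there exist two integers $\alpha,\beta$ with $a<\alpha<\beta<b$ such that $v(\alpha)=A$ and $v(\beta)=B$. Then for every $\delta\in[1/2,1]$ and every real number $\lambda\geq2^{1+\gamma/p}(B-A)$, $$DF_{\gamma,p,\lambda}(\delta,v,(a,b))\geq\frac{1}{2^{\gamma+1}-1}\cdot\frac{1}{\lambda^p\delta^{p+\gamma}}\cdot\frac{(B-A)^p}{(\beta-\alpha)^{p-1}}.$$
   Context: Let $\psi_{\gamma,p,\lambda}(\delta,\Delta)=1$ if $\Delta>\lambda\delta^{1+\gamma/p}$ and $0$ otherwise, for $(\delta,\Delta)\in[0,\infty)^2$. Let $\mathcal{D}=\{i/2^k:i\in\mathbb{Z},k\in\mathbb{N}\}$ be the dyadic numbers. For an interval $(a,b)$ and integer $k\geq0$, let $\mathcal{D}_k(a,b)=\{i\in\mathbb{Z}:[i/2^k,(i+1)/2^k]\subseteq(a,b)\}$. For $\delta>0$ and $v:\mathcal{D}\cap(a,b)\to\mathbb{R}$, the dyadic functional is $$DF_{\gamma,p,\lambda}(\delta,v,(a,b))=\sum_{k=0}^\infty\frac{1}{2^{k(\gamma+1)}}\sum_{i\in\mathcal{D}_k(a,b)}\psi_{\gamma,p,\lambda}\!\left(\frac{\delta}{2^k},\left|v\!\left(\tfrac{i+1}{2^k}\right)-v\!\left(\tfrac{i}{2^k}\right)\right|\right).$$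 *)

theory Defs
  imports "HOL-Analysis.Analysis"
begin

definition psi :: "real \<Rightarrow> real \<Rightarrow> real \<Rightarrow> real \<Rightarrow> real \<Rightarrow> real" where
  "psi \<gamma> p lam \<delta> \<Delta> = (if \<Delta> > lam * \<delta> powr (1 + \<gamma> / p) then 1 else 0)"

definition dyadics :: "real set" where
  "dyadics = {of_int i / 2 ^ k | (i::int) (k::nat). True}"

text \<open>Interval endpoints are extended reals, so unbounded intervals are allowed.\<close>
definition Dk :: "nat \<Rightarrow> ereal \<Rightarrow> ereal \<Rightarrow> int set" where
  "Dk k a b = {i::int. a < ereal (of_int i / 2 ^ k) \<and> ereal (of_int (i + 1) / 2 ^ k) < b}"

definition DF :: "real \<Rightarrow> real \<Rightarrow> real \<Rightarrow> real \<Rightarrow> (real \<Rightarrow> real) \<Rightarrow> ereal \<Rightarrow> ereal \<Rightarrow> ennreal" where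
  "DF \<gamma> p lam \<delta> v a b =
     (\<Sum>k. ennreal (1 / 2 powr (real k * (\<gamma> + 1))) *
        (\<Sum>\<^sub>\<infinity> i \<in> Dk k a b.
           ennreal (psi \<gamma> p lam (\<delta> / 2 ^ k)
             \<bar>v (of_int (i + 1) / 2 ^ k) - v (of_int i / 2 ^ k)\<bar>)))"

end

theory Submission imports Defs begin

lemma powr_convex0:
  fixes p :: real assumes p: "p \<ge> 1"
  shows "convex_on {0..} (\<lambda>x. x powr p)"
proof (rule convex_onI)
  fix t x y :: real assume t: "0 < t" "t < 1" and x: "x \<in> {0..}" and y: "y \<in> {0..}"
  show "((1 - t) *\<^sub>R x + t *\<^sub>R y) powr p \<le> (1 - t) * x powr p + t * y powr p"
  proof (cases "x = 0 \<or> y = 0")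
    case False
    then have "x \<in> {0<..}" "y \<in> {0<..}" using x y by auto
    then show ?thesis using convex_onD[OF powr_convex[OF p], of t x y] t by auto
  next
    case True
    have aux: "s powr p \<le> s" if "0 \<le> s" "s \<le> 1" for s :: real
    proof (cases "s = 0")
      case False
      then have "s powr p \<le> s powr 1" using that p by (intro powr_mono') auto
      then show ?thesis using that by simp
    qed simp
    show ?thesis
    proof (cases "x = 0")
      case True
      have "(t * y) powr p = t powr p * y powr p" using t y by (simp add: powr_mult)
      also have "\<dots> \<le> t * y powr p" using aux[of t] t by (intro mult_right_mono) auto
      finally show ?thesis using True x by simp
    next
      case False
      with True have "y = 0" by auto
      have "((1-t) * x) powr p = (1-t) powr p * x powr p" using t x by (simp add: powr_mult)
      also have "\<dots> \<le> (1-t) * x powr p" using aux[of "1-t"] t by (intro mult_right_mono) auto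
      finally show ?thesis using \<open>y = 0\<close> by simp
    qed
  qed
qed simp

definition blk :: "nat \<Rightarrow> int \<Rightarrow> int set" where
  "blk k i = {i * 2^k ..< (i+1) * 2^k}"

definition Hs :: "(nat \<Rightarrow> int \<Rightarrow> real) \<Rightarrow> nat \<Rightarrow> nat \<Rightarrow> int \<Rightarrow> real" where
  "Hs f r m i = (\<Sum>k\<le>r. \<Sum>j\<in>blk k i. f (m+k) j)"

lemma blk_split: "blk (Suc k) i = blk k (2*i) \<union> blk k (2*i+1)"
  "blk k (2*i) \<inter> blk k (2*i+1) = {}"
  by (auto simp: blk_def algebra_simps)

lemma finite_blk[simp]: "finite (blk k i)" by (simp add: blk_def)

lemma blk0: "blk 0 i = {i}" by (auto simp: blk_def)

lemma Hs_Suc: "Hs f (Suc r) m i = f m i + Hs f r (Suc m) (2*i) + Hs f r (Suc m) (2*i+1)"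
proof -
  have "Hs f (Suc r) m i = (\<Sum>j\<in>blk 0 i. f (m+0) j) + (\<Sum>k\<le>r. \<Sum>j\<in>blk (Suc k) i. f (m + Suc k) j)"
    unfolding Hs_def by (rule sum.atMost_Suc_shift)
  also have "\<dots> = f m i + (\<Sum>k\<le>r. (\<Sum>j\<in>blk k (2*i). f (Suc m + k) j) + (\<Sum>j\<in>blk k (2*i+1). f (Suc m + k) j))"
    using blk_split by (simp add: blk0 sum.union_disjoint)
  also have "\<dots> = f m i + Hs f r (Suc m) (2*i) + Hs f r (Suc m) (2*i+1)"
    by (simp add: Hs_def sum.distrib)
  finally show ?thesis .
qed

lemma powr_le1: "0 \<le> (y::real) \<Longrightarrow> y \<le> 1 \<Longrightarrow> 1 \<le> p \<Longrightarrow> y powr p \<le> 1"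
  by (cases "y = 0") (auto intro: order.trans[OF powr_le_one_le])

lemma two_point:
  fixes a b p :: real assumes "a \<ge> 0" "b \<ge> 0" "p \<ge> 1"
  shows "2 * ((a+b)/2) powr p \<le> a powr p + b powr p"
  using convex_onD[OF powr_convex0[OF assms(3)], of "1/2" a b] assms
  by (simp add: field_simps)

lemma core:
  fixes w :: "nat \<Rightarrow> int \<Rightarrow> real" and c \<rho> Q G p :: real
  assumes Q: "Q = 2*G" "G > 1" and rho: "\<rho> \<ge> 2" "\<rho> powr p = Q * 2 powr (p-1)"
    and p: "p \<ge> 1" and c: "c > 0"
    and w0: "\<And>m i. 0 \<le> w m i"
    and tri: "\<And>m i. w m i \<le> w (Suc m) (2*i) + w (Suc m) (2*i+1)"
  defines "f \<equiv> \<lambda>m i. (if w m i > c / \<rho>^m then 1 else 0) / Q^m"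
    and "x \<equiv> \<lambda>m i. w m i * \<rho>^m / c"
    and "\<psi> \<equiv> \<lambda>y. if y > 1 then Q else y powr p"
  shows "Hs f r m i \<ge> (1/(Q-1)) * \<psi> (x m i) / Q^m - (1/(Q-1)) / (2^m * G^(m+r))"
proof (induction r arbitrary: m i)
  case 0
  have Q1: "Q > 1" using Q by simp
  have xf: "(w m i > c / \<rho>^m) \<longleftrightarrow> x m i > 1" for m i
    using c rho by (simp add: x_def field_simps)
  have x0: "x m i \<ge> 0" using w0 c rho by (simp add: x_def)
  have Qm: "Q^m = 2^m * G^m" using Q by (simp add: power_mult_distrib)
  have "Hs f 0 m i = f m i" by (simp add: Hs_def blk0)
  show ?case
  proof (cases "x m i > 1")
    case True
    have "f m i = 1 / Q^m" using True xf by (simp add: f_def)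
    moreover have "1/(Q-1) * Q / Q^m - 1/(Q-1) / (2^m * G^m) = 1 / Q^m"
    proof -
      have e: "Q/(Q-1) - 1/(Q-1) = 1" using Q1 by (simp add: diff_divide_distrib[symmetric])
      have "1/(Q-1) * Q / Q^m - 1/(Q-1) / (2^m * G^m) = (Q/(Q-1) - 1/(Q-1)) / Q^m"
        by (simp add: Qm diff_divide_distrib)
      then show ?thesis using e by simp
    qed
    ultimately show ?thesis using True \<open>Hs f 0 m i = f m i\<close> by (simp add: \<psi>_def)
  next
    case False
    have "f m i = 0" using False xf by (simp add: f_def)
    have "x m i powr p \<le> 1" using False x0 p by (intro powr_le1) auto
    then have "1/(Q-1) * x m i powr p / Q^m \<le> 1/(Q-1) / Q^m"
      using Q1 by (intro divide_right_mono) (simp_all add: divide_right_mono)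
    then show ?thesis using False \<open>Hs f 0 m i = f m i\<close> \<open>f m i = 0\<close> by (simp add: \<psi>_def Qm)
  qed
next
  case (Suc r)
  define K where "K = 1/(Q-1)"
  have Q1: "Q > 1" using Q by simp
  have K0: "K > 0" using Q1 by (simp add: K_def)
  have KQ: "1 + K = K * Q" using Q1 by (simp add: K_def field_simps)
  have rho0: "\<rho> > 0" using rho by simp
  have xf: "(w m i > c / \<rho>^m) \<longleftrightarrow> x m i > 1" for m i
    using c rho0 by (simp add: x_def field_simps)
  have x0: "x m i \<ge> 0" for m i using w0 c rho0 by (simp add: x_def)
  have psi0: "\<psi> y \<ge> 0" for y using Q1 by (simp add: \<psi>_def)
  define xL xR where "xL = x (Suc m) (2*i)" and "xR = x (Suc m) (2*i+1)"
  have sumx: "xL + xR \<ge> \<rho> * x m i"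
  proof -
    have "xL + xR = (w (Suc m) (2*i) + w (Suc m) (2*i+1)) * \<rho>^Suc m / c"
      by (simp add: xL_def xR_def x_def add_divide_distrib distrib_right)
    also have "\<dots> \<ge> w m i * \<rho>^Suc m / c"
      using tri[of m i] c rho0 by (intro divide_right_mono mult_right_mono) auto
    finally show ?thesis by (simp add: x_def mult_ac)
  qed
  have key: "(if x m i > 1 then 1 else 0) + K * (\<psi> xL + \<psi> xR) / Q \<ge> K * \<psi> (x m i)"
  proof (cases "x m i > 1")
    case True
    have "xL > 1 \<or> xR > 1"
    proof (rule ccontr)
      assume "\<not> ?thesis"
      then have "xL + xR \<le> 2" by simp
      moreover have "\<rho> * x m i > \<rho>" using True rho0 by simp
      ultimately show False using sumx rho by simp
    qed
    then have "\<psi> xL + \<psi> xR \<ge> Q" using psi0[of xL] psi0[of xR] by (auto simp: \<psi>_def)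
    then have "K * (\<psi> xL + \<psi> xR) / Q \<ge> K * Q / Q" using K0 Q1
      by (intro divide_right_mono mult_left_mono) auto
    then show ?thesis using True KQ Q1 by (simp add: \<psi>_def)
  next
    case False
    have xp1: "x m i powr p \<le> 1" using False x0 p by (intro powr_le1) auto
    have "\<psi> xL + \<psi> xR \<ge> Q * x m i powr p"
    proof (cases "xL > 1 \<or> xR > 1")
      case True
      have "Q * x m i powr p \<le> Q" using xp1 Q1 by simp
      moreover have "0 \<le> \<psi> xL" "0 \<le> \<psi> xR" using psi0 by simp_all
      moreover have "xL > 1 \<Longrightarrow> \<psi> xL = Q" "xR > 1 \<Longrightarrow> \<psi> xR = Q" by (simp_all add: \<psi>_def)
      ultimately show ?thesis using True by linarith
    next
      case False
      have "2 * ((xL+xR)/2) powr p \<le> xL powr p + xR powr p"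
        using x0 p by (intro two_point) (auto simp: xL_def xR_def)
      moreover have "((xL+xR)/2) powr p \<ge> (\<rho> * x m i / 2) powr p"
        using sumx x0[of m i] rho0 p by (intro powr_mono2) auto
      moreover have "(\<rho> * x m i / 2) powr p = \<rho> powr p * x m i powr p / 2 powr p"
        using x0[of m i] rho0 by (simp add: powr_mult powr_divide)
      moreover have "2 * (\<rho> powr p / 2 powr p) = Q"
      proof -
        have "2 * (\<rho> powr p / 2 powr p) = Q * (2 powr (p-1) * 2 / 2 powr p)" using rho by simp
        also have "2 powr (p-1) * 2 = 2 powr p" by (simp add: powr_diff)
        finally show ?thesis by simp
      qed
      ultimately have "Q * x m i powr p \<le> xL powr p + xR powr p"
      proof -
        assume a1: "2 * ((xL+xR)/2) powr p \<le> xL powr p + xR powr p"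
          and a2: "((xL+xR)/2) powr p \<ge> (\<rho> * x m i / 2) powr p"
          and a3: "(\<rho> * x m i / 2) powr p = \<rho> powr p * x m i powr p / 2 powr p"
          and a4: "2 * (\<rho> powr p / 2 powr p) = Q"
        have "Q * x m i powr p = 2 * (\<rho> * x m i / 2) powr p" using a3 a4[symmetric] by simp
        then show ?thesis using a1 a2 by linarith
      qed
      then show ?thesis using False by (simp add: \<psi>_def)
    qed
    then have "K * (\<psi> xL + \<psi> xR) / Q \<ge> K * (Q * x m i powr p) / Q" using K0 Q1
      by (intro divide_right_mono mult_left_mono) auto
    then show ?thesis using False Q1 by (simp add: \<psi>_def)
  qed
  have fmi: "f m i = (if x m i > 1 then 1 else 0) / Q^m" using xf by (simp add: f_def)
  have IH1: "Hs f r (Suc m) (2*i) \<ge> K * \<psi> xL / Q^Suc m - K / (2^Suc m * G^(Suc m + r))"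
    using Suc.IH[of "Suc m" "2*i"] by (simp add: K_def xL_def)
  have IH2: "Hs f r (Suc m) (2*i+1) \<ge> K * \<psi> xR / Q^Suc m - K / (2^Suc m * G^(Suc m + r))"
    using Suc.IH[of "Suc m" "2*i+1"] by (simp add: K_def xR_def)
  have err: "2 * (K / (2^Suc m * G^(Suc m + r))) = K / (2^m * G^(m + Suc r))" by simp
  have "K * \<psi> (x m i) / Q^m \<le> ((if x m i > 1 then 1 else 0) + K * (\<psi> xL + \<psi> xR) / Q) / Q^m"
    using key Q1 by (intro divide_right_mono) auto
  also have "\<dots> = f m i + K * \<psi> xL / Q^Suc m + K * \<psi> xR / Q^Suc m"
    using Q1 by (simp add: fmi field_simps)
  finally have "K * \<psi> (x m i) / Q^m - K / (2^m * G^(m + Suc r)) \<le>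
     f m i + (K * \<psi> xL / Q^Suc m - K / (2^Suc m * G^(Suc m + r)))
           + (K * \<psi> xR / Q^Suc m - K / (2^Suc m * G^(Suc m + r)))"
    using err by linarith
  also have "\<dots> \<le> Hs f (Suc r) m i" using IH1 IH2 Hs_Suc[of f r m i] by linarith
  finally show ?case by (simp add: K_def)
qed

lemma Ico_int_Suc: "{a..<a + int (Suc N)} = insert (a + int N) {a..<a + int N}"
  by auto

lemma Ico_int_Suc': "{a..<1 + (a + int N)} = insert (a + int N) {a..<a + int N}"
  by auto

lemma blocks_union:
  "(\<Sum>u\<in>{a..<a+int N}. \<Sum>j\<in>blk k u. g j) = (\<Sum>j\<in>{a*2^k..<(a+int N)*2^k}. (g j :: real))"
proof (induction N)
  case 0 then show ?case by simp
next
  case (Suc N)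
  have pk: "(0::int) < 2^k" by simp
  have le: "a*2^k \<le> (a + int N) * 2^k" using pk by (intro mult_right_mono) auto
  have eq: "{a*2^k..<(a+int (Suc N))*2^k} = {a*2^k..<(a+int N)*2^k} \<union> blk k (a + int N)"
  proof -
    have gen: "{a*t..<(a+int (Suc N))*t} = {a*t..<(a+int N)*t} \<union> {(a + int N) * t..<(a + int N + 1) * t}"
      if "0 < t" for t :: int
    proof -
      have nn: "0 \<le> t * int N" using that by simp
      show ?thesis using that by (auto simp: algebra_simps) (use nn in linarith)
    qed
    show ?thesis unfolding blk_def by (rule gen) simp
  qed
  have dj: "{a*2^k..<(a+int N)*2^k} \<inter> blk k (a + int N) = {}" by (auto simp: blk_def)
  show ?case
    unfolding Ico_int_Suc eq using Suc.IH dj by (simp add: sum.union_disjoint)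
qed

lemma telescope_int:
  "(\<Sum>u\<in>{a..<a+int N}. g (u+1) - g u) = g (a + int N) - (g a :: real)"
proof (induction N)
  case (Suc N)
  then show ?case unfolding Ico_int_Suc by (simp add: algebra_simps)
qed simp

theorem proposition2p2:
  fixes \<gamma> p A B \<delta> lam :: real and a b :: ereal and v :: "real \<Rightarrow> real"
    and \<alpha> \<beta> :: int
  assumes "\<gamma> > 0" and "p \<ge> 1" and "B \<ge> A"
    and "\<forall>x \<in> dyadics. a < ereal x \<and> ereal x < b \<longrightarrow> A \<le> v x \<and> v x \<le> B"
    and "a < ereal (of_int \<alpha>)" and "\<alpha> < \<beta>" and "ereal (of_int \<beta>) < b"
    and "v (of_int \<alpha>) = A" and "v (of_int \<beta>) = B"
    and "1/2 \<le> \<delta>" and "\<delta> \<le> 1"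
    and "lam \<ge> 2 powr (1 + \<gamma> / p) * (B - A)"
  shows "DF \<gamma> p lam \<delta> v a b \<ge>
    ennreal (1 / (2 powr (\<gamma> + 1) - 1) * (1 / (lam powr p * \<delta> powr (p + \<gamma>)))
             * ((B - A) powr p / (of_int (\<beta> - \<alpha>)) powr (p - 1)))"
proof (cases "B = A")
  case True
  then show ?thesis by simp
next
  case False
  note g0 = assms(1) and p1 = assms(2) and vAB = assms(4) and a\<alpha> = assms(5)
    and \<alpha>\<beta> = assms(6) and \<beta>b = assms(7) and v\<alpha> = assms(8) and v\<beta> = assms(9)
    and d1 = assms(10) and d2 = assms(11) and lamge = assms(12)
  define D where "D = B - A"
  have D0: "D > 0" using False assms(3) by (simp add: D_def)
  define e where "e = 1 + \<gamma> / p"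
  have p0: "p > 0" using p1 by simp
  have e1: "e \<ge> 1" using g0 p0 by (simp add: e_def)
  define Q where "Q = 2 powr (\<gamma> + 1)"
  define G where "G = 2 powr \<gamma>"
  define \<rho> where "\<rho> = 2 powr e"
  define c where "c = lam * \<delta> powr e"
  define K where "K = 1 / (Q - 1)"
  define n where "n = real_of_int (\<beta> - \<alpha>)"
  have n1: "n \<ge> 1" using \<alpha>\<beta> by (simp add: n_def)
  have QG: "Q = 2 * G" by (simp add: Q_def G_def powr_add)
  have G1: "G > 1" using g0 by (simp add: G_def)
  have Q1: "Q > 1" using G1 QG by simp
  have K0: "K > 0" using Q1 by (simp add: K_def)
  have rho2: "\<rho> \<ge> 2" using powr_mono[OF e1, of 2] by (simp add: \<rho>_def)
  have rho0: "\<rho> > 0" using rho2 by simp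
  have rhop: "\<rho> powr p = Q * 2 powr (p - 1)"
  proof -
    have "\<rho> powr p = 2 powr (e * p)" by (simp add: \<rho>_def powr_powr)
    also have "e * p = (\<gamma> + 1) + (p - 1)" using p0 by (simp add: e_def field_simps)
    finally show ?thesis unfolding Q_def by (simp only: powr_add)
  qed
  have dpos: "\<delta> > 0" using d1 by simp
  have lamD: "lam \<ge> \<rho> * D" using lamge by (simp add: \<rho>_def D_def e_def)
  have cD: "c \<ge> D"
  proof -
    have "c \<ge> \<rho> * D * \<delta> powr e" unfolding c_def using lamD by (intro mult_right_mono) auto
    also have "\<rho> * D * \<delta> powr e = D * (2 * \<delta>) powr e" by (simp add: \<rho>_def powr_mult)
    also have "(2 * \<delta>) powr e \<ge> 1" using d1 e1 by (intro ge_one_powr_ge_zero) auto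
    then have "D * (2 * \<delta>) powr e \<ge> D" using D0 by simp
    finally show ?thesis by simp
  qed
  have c0: "c > 0" using cD D0 by simp
  define w where "w = (\<lambda>k (j::int). \<bar>v (of_int (j + 1) / 2 ^ k) - v (of_int j / 2 ^ k)\<bar>)"
  have w0: "\<And>m i. 0 \<le> w m i" by (simp add: w_def)
  have tri: "\<And>m i. w m i \<le> w (Suc m) (2*i) + w (Suc m) (2*i+1)"
  proof -
    fix m i
    have e1: "real_of_int (2*i) / 2^Suc m = real_of_int i / 2^m" by simp
    have e2: "real_of_int (2*i+1+1) / 2^Suc m = real_of_int (i+1) / 2^m" by (simp add: field_simps)
    show "w m i \<le> w (Suc m) (2*i) + w (Suc m) (2*i+1)"
      unfolding w_def using e1 e2 by simp
  qed
  define f where "f \<equiv> \<lambda>m i. (if w m i > c / \<rho>^m then 1 else 0) / Q^m"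
  have rhok: "(2^k) powr e = \<rho>^k" for k :: nat
  proof -
    have "(2::real)^k = 2 powr real k" by (simp add: powr_realpow)
    then have "((2::real)^k) powr e = (2 powr e) powr real k" by (simp add: powr_powr mult.commute)
    also have "\<dots> = \<rho>^k" using rho0 by (simp add: \<rho>_def powr_realpow)
    finally show ?thesis .
  qed
  have psi_eq: "psi \<gamma> p lam (\<delta>/2^k) (w k j) = (if w k j > c/\<rho>^k then 1 else 0)" for k j
  proof -
    have "lam * (\<delta>/2^k) powr e = c/\<rho>^k"
      using dpos by (simp add: powr_divide rhok c_def)
    then show ?thesis by (simp add: psi_def e_def[symmetric])
  qed
  have wt_eq: "1 / 2 powr (real k * (\<gamma>+1)) = 1/Q^k" for k
  proof -
    have "(2::real) powr (real k * (\<gamma>+1)) = Q powr real k" by (simp add: Q_def powr_powr mult.commute)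
    also have "\<dots> = Q^k" using Q1 by (simp add: powr_realpow)
    finally show ?thesis by simp
  qed
  have term_ge: "ennreal (1 / 2 powr (real k * (\<gamma> + 1))) *
        (\<Sum>\<^sub>\<infinity> i \<in> Dk k a b.
           ennreal (psi \<gamma> p lam (\<delta> / 2 ^ k)
             \<bar>v (of_int (i + 1) / 2 ^ k) - v (of_int i / 2 ^ k)\<bar>))
     \<ge> ennreal (\<Sum>j\<in>{\<alpha>*2^k..<\<beta>*2^k}. f k j)" for k
  proof -
    define S where "S = {\<alpha>*2^k..<\<beta>*2^k}"
    define g where "g = (\<lambda>i. ennreal (psi \<gamma> p lam (\<delta> / 2 ^ k)
             \<bar>v (of_int (i + 1) / 2 ^ k) - v (of_int i / 2 ^ k)\<bar>))"
    have SD: "S \<subseteq> Dk k a b"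
    proof
      fix i assume "i \<in> S"
      then have i1: "\<alpha>*2^k \<le> i" and i2: "i + 1 \<le> \<beta>*2^k" by (auto simp: S_def)
      have "real_of_int (\<alpha>*2^k) \<le> real_of_int i" using i1 by linarith
      then have r1: "real_of_int \<alpha> \<le> of_int i / 2^k" by (simp add: field_simps)
      have "real_of_int (i+1) \<le> real_of_int (\<beta>*2^k)" using i2 by linarith
      then have r2: "real_of_int (i+1) / 2^k \<le> of_int \<beta>" by (simp add: field_simps)
      have "a < ereal (of_int i / 2^k)" using a\<alpha> r1 by (meson ereal_less_eq(3) order_less_le_trans)
      moreover have "ereal (of_int (i+1) / 2^k) < b" using \<beta>b r2 by (meson ereal_less_eq(3) order_le_less_trans)
      ultimately show "i \<in> Dk k a b" by (simp add: Dk_def)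
    qed
    have "infsum g S \<le> infsum g (Dk k a b)"
      using SD by (intro infsum_mono_neutral) (auto intro: nonneg_summable_on_complete)
    moreover have "infsum g S = ennreal (\<Sum>j\<in>S. psi \<gamma> p lam (\<delta>/2^k) (w k j))"
      by (simp add: g_def S_def w_def psi_def)
    moreover have "ennreal (1 / 2 powr (real k * (\<gamma> + 1))) * ennreal (\<Sum>j\<in>S. psi \<gamma> p lam (\<delta>/2^k) (w k j))
        = ennreal (\<Sum>j\<in>S. f k j)"
    proof -
      have "(1 / 2 powr (real k * (\<gamma> + 1))) * (\<Sum>j\<in>S. psi \<gamma> p lam (\<delta>/2^k) (w k j)) = (\<Sum>j\<in>S. f k j)"
        by (simp add: wt_eq psi_eq sum_distrib_left f_def)
      moreover have "0 \<le> (\<Sum>j\<in>S. psi \<gamma> p lam (\<delta>/2^k) (w k j))"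
        by (intro sum_nonneg) (simp add: psi_def)
      ultimately show ?thesis using ennreal_mult''[symmetric] by metis
    qed
    ultimately have "ennreal (\<Sum>j\<in>S. f k j) \<le> ennreal (1 / 2 powr (real k * (\<gamma> + 1))) * infsum g (Dk k a b)"
      by (metis mult_left_mono zero_le)
    then show ?thesis by (simp add: g_def S_def)
  qed
  have f0: "f k j \<ge> 0" for k j using Q1 by (simp add: f_def)
  have DF_ge: "DF \<gamma> p lam \<delta> v a b \<ge> ennreal (\<Sum>k\<le>M. \<Sum>j\<in>{\<alpha>*2^k..<\<beta>*2^k}. f k j)" for M
  proof -
    define t where "t = (\<lambda>k. ennreal (1 / 2 powr (real k * (\<gamma> + 1))) *
        (\<Sum>\<^sub>\<infinity> i \<in> Dk k a b.
           ennreal (psi \<gamma> p lam (\<delta> / 2 ^ k)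
             \<bar>v (of_int (i + 1) / 2 ^ k) - v (of_int i / 2 ^ k)\<bar>)))"
    have "ennreal (\<Sum>k\<le>M. \<Sum>j\<in>{\<alpha>*2^k..<\<beta>*2^k}. f k j) = (\<Sum>k\<le>M. ennreal (\<Sum>j\<in>{\<alpha>*2^k..<\<beta>*2^k}. f k j))"
      using f0 by (simp add: sum_nonneg)
    also have "\<dots> \<le> (\<Sum>k\<le>M. t k)" unfolding t_def by (intro sum_mono term_ge)
    also have "\<dots> \<le> suminf t" by (intro sum_le_suminf) auto
    also have "suminf t = DF \<gamma> p lam \<delta> v a b" by (simp add: DF_def t_def)
    finally show ?thesis .
  qed
  have \<beta>eq: "\<beta> = \<alpha> + int (nat (\<beta> - \<alpha>))" using \<alpha>\<beta> by simp
  have swap: "(\<Sum>k\<le>M. \<Sum>j\<in>{\<alpha>*2^k..<\<beta>*2^k}. f k j) = (\<Sum>u\<in>{\<alpha>..<\<beta>}. Hs f M 0 u)" for M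
  proof -
    have "(\<Sum>u\<in>{\<alpha>..<\<beta>}. Hs f M 0 u) = (\<Sum>k\<le>M. \<Sum>u\<in>{\<alpha>..<\<beta>}. \<Sum>j\<in>blk k u. f k j)"
      unfolding Hs_def by (simp add: sum.swap[of _ "{\<alpha>..<\<beta>}"])
    also have "\<dots> = (\<Sum>k\<le>M. \<Sum>j\<in>{\<alpha>*2^k..<\<beta>*2^k}. f k j)"
    proof (rule sum.cong[OF refl])
      fix k
      show "(\<Sum>u\<in>{\<alpha>..<\<beta>}. \<Sum>j\<in>blk k u. f k j) = (\<Sum>j\<in>{\<alpha>*2^k..<\<beta>*2^k}. f k j)"
        using blocks_union[where a=\<alpha> and N="nat (\<beta> - \<alpha>)" and k=k and g="f k"] \<beta>eq[symmetric] by simp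
    qed
    finally show ?thesis by simp
  qed
  have vin: "A \<le> v (of_int u) \<and> v (of_int u) \<le> B" if "\<alpha> \<le> u" "u \<le> \<beta>" for u
  proof -
    have "real_of_int u \<in> dyadics" unfolding dyadics_def by (rule CollectI, rule exI[of _ u], rule exI[of _ 0]) simp
    moreover have "a < ereal (of_int u)" using a\<alpha> that(1) by (meson ereal_less_eq(3) of_int_le_iff order_less_le_trans)
    moreover have "ereal (of_int u) < b" using \<beta>b that(2) by (meson ereal_less_eq(3) of_int_le_iff order_le_less_trans)
    ultimately show ?thesis using vAB by blast
  qed
  have wD: "w 0 u \<le> D" if "u \<in> {\<alpha>..<\<beta>}" for u
  proof -
    have "w 0 u = \<bar>v (of_int (u+1)) - v (of_int u)\<bar>" by (simp add: w_def)
    moreover have "A \<le> v (of_int (u+1)) \<and> v (of_int (u+1)) \<le> B" using that by (intro vin) auto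
    moreover have "A \<le> v (of_int u) \<and> v (of_int u) \<le> B" using that by (intro vin) auto
    ultimately show ?thesis by (simp add: D_def abs_le_iff)
  qed
  have Hs_ge: "Hs f M 0 u \<ge> K * (w 0 u / c) powr p - K / G^M" if "u \<in> {\<alpha>..<\<beta>}" for M u
  proof -
    have h: "Hs f M 0 u \<ge> (1/(Q-1)) * (if w 0 u * \<rho>^0 / c > 1 then Q else (w 0 u * \<rho>^0 / c) powr p) / Q^0
        - (1/(Q-1)) / (2^0 * G^(0+M))"
      using core[where Q=Q and G=G and \<rho>=\<rho> and p=p and c=c and w=w and r=M and m=0 and i=u,
        OF QG G1 rho2 rhop p1 c0 w0 tri] unfolding f_def by simp
    have "\<not> w 0 u / c > 1" using wD[OF that] cD c0 by simp
    then show ?thesis using h by (simp add: K_def)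
  qed
  have jensen: "(\<Sum>u\<in>{\<alpha>..<\<beta>}. (w 0 u / c) powr p) \<ge> D powr p / (c powr p * n powr (p-1))"
  proof -
    define S where "S = {\<alpha>..<\<beta>}"
    define y where "y = (\<lambda>u. w 0 u / c)"
    have finS: "finite S" "S \<noteq> {}" using \<alpha>\<beta> by (auto simp: S_def)
    have cardS: "real (card S) = n" using \<alpha>\<beta> by (simp add: S_def n_def)
    have n0: "n > 0" using n1 by simp
    have y0: "y u \<ge> 0" for u using w0 c0 by (simp add: y_def)
    have tel: "(\<Sum>u\<in>S. v (of_int (u+1)) - v (of_int u)) = v (of_int \<beta>) - v (of_int \<alpha>)"
      using telescope_int[where a=\<alpha> and N="nat (\<beta> - \<alpha>)" and g="\<lambda>u. v (of_int u)"] \<beta>eq[symmetric]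
      by (simp add: S_def)
    have sumw: "(\<Sum>u\<in>S. w 0 u) \<ge> D"
    proof -
      have "D = \<bar>\<Sum>u\<in>S. v (of_int (u+1)) - v (of_int u)\<bar>" using tel v\<alpha> v\<beta> D0 by (simp add: D_def)
      also have "\<dots> \<le> (\<Sum>u\<in>S. \<bar>v (of_int (u+1)) - v (of_int u)\<bar>)" by (rule sum_abs)
      also have "\<dots> = (\<Sum>u\<in>S. w 0 u)" by (simp add: w_def)
      finally show ?thesis .
    qed
    have sumy: "(\<Sum>u\<in>S. y u) \<ge> D / c" using sumw c0 by (simp add: y_def sum_divide_distrib[symmetric] divide_right_mono)
    have J: "((\<Sum>u\<in>S. (1/n) *\<^sub>R y u)) powr p \<le> (\<Sum>u\<in>S. (1/n) * (y u) powr p)"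
      using convex_on_sum[OF finS powr_convex0[OF p1], of "\<lambda>_. 1/n" y] cardS n0 y0 by simp
    have "(D / (c * n)) powr p \<le> ((\<Sum>u\<in>S. y u) / n) powr p"
      using sumy D0 c0 n0 p0 by (intro powr_mono2) (auto simp: divide_right_mono simp flip: divide_divide_eq_left)
    also have "\<dots> = ((\<Sum>u\<in>S. (1/n) *\<^sub>R y u)) powr p" by (simp add: sum_distrib_left[symmetric] divide_inverse mult.commute)
    also have "\<dots> \<le> (\<Sum>u\<in>S. (y u) powr p) / n" using J by (simp add: sum_distrib_left[symmetric] divide_inverse mult.commute)
    finally have "n * (D / (c * n)) powr p \<le> (\<Sum>u\<in>S. (y u) powr p)" using n0 by (simp add: field_simps)
    moreover have "n * (D / (c * n)) powr p = D powr p / (c powr p * n powr (p-1))"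
    proof -
      have "n powr p = n * n powr (p - 1)" using n0 by (simp add: powr_diff)
      then show ?thesis using n0 c0 D0 by (simp add: powr_divide powr_mult)
    qed
    ultimately show ?thesis by (simp add: S_def y_def)
  qed
  define T where "T = K * (D powr p / (c powr p * n powr (p-1)))"
  have T_eq: "1 / (2 powr (\<gamma> + 1) - 1) * (1 / (lam powr p * \<delta> powr (p + \<gamma>)))
             * ((B - A) powr p / (of_int (\<beta> - \<alpha>)) powr (p - 1)) = T"
  proof -
    have lam0: "lam > 0" using lamD rho0 D0 by (smt (verit) mult_pos_pos)
    have "c powr p = lam powr p * (\<delta> powr e) powr p" using lam0 dpos by (simp add: c_def powr_mult)
    also have "(\<delta> powr e) powr p = \<delta> powr (p + \<gamma>)"
    proof -
      have "e * p = p + \<gamma>" using p0 by (simp add: e_def field_simps)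
      then show ?thesis by (simp add: powr_powr)
    qed
    finally have cp: "c powr p = lam powr p * \<delta> powr (p + \<gamma>)" .
    show ?thesis by (simp add: T_def K_def cp Q_def D_def n_def)
  qed
  have bound: "DF \<gamma> p lam \<delta> v a b \<ge> ennreal (T - n * K / G^M)" for M
  proof -
    have "T - n * K / G^M \<le> K * (\<Sum>u\<in>{\<alpha>..<\<beta>}. (w 0 u / c) powr p) - n * K / G^M"
      using mult_left_mono[OF jensen, of K] K0 by (simp add: T_def)
    also have "\<dots> = (\<Sum>u\<in>{\<alpha>..<\<beta>}. K * (w 0 u / c) powr p - K / G^M)"
      using \<alpha>\<beta> by (simp add: sum_subtractf sum_distrib_left n_def)
    also have "\<dots> \<le> (\<Sum>u\<in>{\<alpha>..<\<beta>}. Hs f M 0 u)" by (intro sum_mono Hs_ge)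
    also have "\<dots> = (\<Sum>k\<le>M. \<Sum>j\<in>{\<alpha>*2^k..<\<beta>*2^k}. f k j)" by (rule swap[symmetric])
    finally have "ennreal (T - n * K / G^M) \<le> ennreal (\<Sum>k\<le>M. \<Sum>j\<in>{\<alpha>*2^k..<\<beta>*2^k}. f k j)"
      by (rule ennreal_leI)
    also have "\<dots> \<le> DF \<gamma> p lam \<delta> v a b" by (rule DF_ge)
    finally show ?thesis .
  qed
  have "ennreal T \<le> DF \<gamma> p lam \<delta> v a b"
  proof (rule ennreal_le_epsilon)
    fix \<epsilon> :: real assume e0: "0 < \<epsilon>"
    obtain M where M: "n * K / \<epsilon> < G^M" using real_arch_pow[OF G1] by blast
    have GM: "G^M > 0" using G1 by simp
    have s: "n * K / G^M < \<epsilon>" using M e0 GM by (simp add: field_simps)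
    have "ennreal T \<le> ennreal (T - n * K / G^M) + ennreal \<epsilon>"
    proof (cases "T - n * K / G^M \<ge> 0")
      case True
      then have "ennreal (T - n * K / G^M) + ennreal \<epsilon> = ennreal (T - n * K / G^M + \<epsilon>)"
        using e0 by simp
      then show ?thesis using s by (simp add: ennreal_leI)
    next
      case False
      then have "T \<le> \<epsilon>" using s by simp
      then have "ennreal T \<le> ennreal \<epsilon>" by (rule ennreal_leI)
      then show ?thesis by (simp add: add_increasing)
    qed
    also have "\<dots> \<le> DF \<gamma> p lam \<delta> v a b + ennreal \<epsilon>" by (intro add_right_mono bound)
    finally show "ennreal T \<le> DF \<gamma> p lam \<delta> v a b + ennreal \<epsilon>" .
  qed
  then show ?thesis using T_eq by simp
qed

end
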